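(* Let $A$ and $B$ be C$^*$-algebras, where $A$ is unital with unit $1$, and let $T:A\to B$ be a bounded linear map which is a $^*$-homomorphism at a unitary element $u\in A$. Then $T(1)$ is a projection, $T(1)T(a)=T(a)T(1)$ for every $a\in A$, and $T(1)T$ (the map $a\mapsto T(1)T(a)$) is a Jordan homomorphism. Furthermore, if in addition $T(1)T(x)=T(x)$ for every $x\in A$ (which is the case when $B$ is unital and $T(u)$ is a unitary in $B$), then $T$ is a Jordan homomorphism.
   Context: A map $T:A\to B$ between C$^*$-algebras is a $^*$-homomorphism at $z\in A$ if for all $a,b\in A$ with $ab^*=z$ one has $T(ab^* )=T(a)T(b)^*=T(z)$, and for all $c,d\in A$ with $c^*d=z$ one has $T(c^*d)=T(c)^*T(d)=T(z)$. A Jordan homomorphism is a linear map $S$ with $S(a\circ b)=S(a)\circ S(b)$ for all $a,b$, where $a\circ b=\frac12(ab+ba)$. *)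

theory Defs
  imports Complex_Main
begin

text \<open>C*-algebras (possibly non-unital): complex Banach algebras with an
  involution satisfying the C*-identity. The complex scalar multiplication is
  a class parameter compatible with the real one.\<close>

class cstar_algebra = real_normed_algebra + banach +
  fixes cscale :: "complex \<Rightarrow> 'a \<Rightarrow> 'a" (infixr "*\<^sub>C" 75)
    and star :: "'a \<Rightarrow> 'a"
  assumes cscale_add_right: "c *\<^sub>C (x + y) = c *\<^sub>C x + c *\<^sub>C y"
    and cscale_add_left: "(c + d) *\<^sub>C x = c *\<^sub>C x + d *\<^sub>C x"
    and cscale_cscale: "c *\<^sub>C (d *\<^sub>C x) = (c * d) *\<^sub>C x"
    and cscale_one: "1 *\<^sub>C x = x"
    and scaleR_cscale: "scaleR r x = complex_of_real r *\<^sub>C x"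
    and norm_cscale: "norm (c *\<^sub>C x) = cmod c * norm x"
    and mult_cscale_left: "(c *\<^sub>C x) * y = c *\<^sub>C (x * y)"
    and mult_cscale_right: "x * (c *\<^sub>C y) = c *\<^sub>C (x * y)"
    and star_star: "star (star x) = x"
    and star_add: "star (x + y) = star x + star y"
    and star_cscale: "star (c *\<^sub>C x) = cnj c *\<^sub>C star x"
    and star_mult: "star (x * y) = star y * star x"
    and cstar_identity: "norm (star x * x) = norm x * norm x"

definition clinear :: "('a::cstar_algebra \<Rightarrow> 'b::cstar_algebra) \<Rightarrow> bool" where
  "clinear T \<longleftrightarrow> (\<forall>x y. T (x + y) = T x + T y) \<and> (\<forall>c x. T (c *\<^sub>C x) = c *\<^sub>C T x)"

definition bounded_clinear :: "('a::cstar_algebra \<Rightarrow> 'b::cstar_algebra) \<Rightarrow> bool" where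
  "bounded_clinear T \<longleftrightarrow> clinear T \<and> (\<exists>K. \<forall>x. norm (T x) \<le> norm x * K)"

definition star_hom_at :: "('a::cstar_algebra \<Rightarrow> 'b::cstar_algebra) \<Rightarrow> 'a \<Rightarrow> bool" where
  "star_hom_at T z \<longleftrightarrow>
     (\<forall>a b. a * star b = z \<longrightarrow> T (a * star b) = T a * star (T b) \<and> T a * star (T b) = T z) \<and>
     (\<forall>c d. star c * d = z \<longrightarrow> T (star c * d) = star (T c) * T d \<and> star (T c) * T d = T z)"

definition unitary :: "'a::{cstar_algebra, ring_1} \<Rightarrow> bool" where
  "unitary u \<longleftrightarrow> u * star u = 1 \<and> star u * u = 1"

definition projection :: "'a::cstar_algebra \<Rightarrow> bool" where
  "projection p \<longleftrightarrow> p * p = p \<and> star p = p"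

definition jordan_prod :: "'a::cstar_algebra \<Rightarrow> 'a \<Rightarrow> 'a" where
  "jordan_prod a b = (1/2 :: complex) *\<^sub>C (a * b + b * a)"

definition jordan_hom :: "('a::cstar_algebra \<Rightarrow> 'b::cstar_algebra) \<Rightarrow> bool" where
  "jordan_hom S \<longleftrightarrow> clinear S \<and> (\<forall>a b. S (jordan_prod a b) = jordan_prod (S a) (S b))"

end

theory Submission imports Defs "HOL-Analysis.Analysis" begin

lemma star_zero: "star (0::'a::cstar_algebra) = 0"
  using star_add[of "0::'a" 0] by simp

lemma star_minus: "star (- (x::'a::cstar_algebra)) = - star x"
  using star_add[of x "-x"] by (simp add: star_zero eq_neg_iff_add_eq_0 add.commute)

lemma star_diff: "star ((x::'a::cstar_algebra) - y) = star x - star y"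
  using star_add[of x "-y"] by (simp add: star_minus)

lemma star_scaleR: "star (r *\<^sub>R (x::'a::cstar_algebra)) = r *\<^sub>R star x"
  by (simp add: scaleR_cscale star_cscale)

lemma norm_star_le: "norm (x::'a::cstar_algebra) \<le> norm (star x)"
proof (cases "norm x = 0")
  case False
  have "norm x * norm x \<le> norm (star x) * norm x"
    using cstar_identity[of x] norm_mult_ineq[of "star x" x] by simp
  then show ?thesis using False by (simp add: mult_le_cancel_right)
qed simp

lemma norm_star: "norm (star (x::'a::cstar_algebra)) = norm x"
  using norm_star_le[of x] norm_star_le[of "star x"] by (simp add: star_star)

lemma star_one: "star (1::'a::{cstar_algebra,ring_1}) = 1"
proof -
  have "star (star (1::'a) * 1) = star 1 * star (star 1)" by (rule star_mult)
  then show ?thesis by (simp add: star_star)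
qed

lemma clinear_add: "clinear T \<Longrightarrow> T (x + y) = T x + T y"
  unfolding clinear_def by blast
lemma clinear_cscale: "clinear T \<Longrightarrow> T (c *\<^sub>C x) = c *\<^sub>C T x"
  unfolding clinear_def by blast
lemma clinear_scaleR: "clinear T \<Longrightarrow> T (r *\<^sub>R x) = r *\<^sub>R T x"
  by (simp add: scaleR_cscale clinear_cscale)
lemma clinear_zero: "clinear T \<Longrightarrow> T 0 = 0"
  using clinear_add[of T 0 0] by simp
lemma clinear_minus: "clinear T \<Longrightarrow> T (- x) = - T x"
  using clinear_add[of T x "-x"] by (simp add: clinear_zero eq_neg_iff_add_eq_0 add.commute)
lemma clinear_diff: "clinear T \<Longrightarrow> T (x - y) = T x - T y"
  using clinear_add[of T x "-y"] by (simp add: clinear_minus)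

lemma right_inv_exists:
  fixes y :: "'a::{real_normed_algebra,banach,ring_1}"
  assumes "norm y \<le> 1/2"
  shows "\<exists>v. v = 1 + y * v"
proof -
  have "\<exists>!v. (\<lambda>v. 1 + y * v) v = v"
  proof (rule banach_fix_type[of "1/2"])
    show "\<forall>a b. dist ((\<lambda>v. 1 + y * v) a) ((\<lambda>v. 1 + y * v) b) \<le> 1/2 * dist a b"
    proof (intro allI)
      fix a b :: 'a
      have "norm (y * a - y * b) = norm (y * (a - b))" by (simp add: algebra_simps)
      also have "\<dots> \<le> norm y * norm (a - b)" by (rule norm_mult_ineq)
      also have "\<dots> \<le> 1/2 * norm (a - b)" using assms by (intro mult_right_mono) auto
      finally show "dist ((\<lambda>v. 1 + y * v) a) ((\<lambda>v. 1 + y * v) b) \<le> 1/2 * dist a b"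
        by (simp add: dist_norm)
    qed
  qed auto
  then show ?thesis by metis
qed

lemma left_inv_exists:
  fixes y :: "'a::{real_normed_algebra,banach,ring_1}"
  assumes "norm y \<le> 1/2"
  shows "\<exists>v. v = 1 + v * y"
proof -
  have "\<exists>!v. (\<lambda>v. 1 + v * y) v = v"
  proof (rule banach_fix_type[of "1/2"])
    show "\<forall>a b. dist ((\<lambda>v. 1 + v * y) a) ((\<lambda>v. 1 + v * y) b) \<le> 1/2 * dist a b"
    proof (intro allI)
      fix a b :: 'a
      have "norm (a * y - b * y) = norm ((a - b) * y)" by (simp add: algebra_simps)
      also have "\<dots> \<le> norm (a - b) * norm y" by (rule norm_mult_ineq)
      also have "\<dots> = norm y * norm (a - b)" by simp
      also have "\<dots> \<le> 1/2 * norm (a - b)" using assms by (intro mult_right_mono) auto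
      finally show "dist ((\<lambda>v. 1 + v * y) a) ((\<lambda>v. 1 + v * y) b) \<le> 1/2 * dist a b"
        by (simp add: dist_norm)
    qed
  qed auto
  then show ?thesis by metis
qed

lemma inv_norm_bound:
  fixes y v :: "'a::{real_normed_algebra,ring_1}"
  assumes "norm y \<le> 1/2" and "v = 1 + y * v \<or> v = 1 + v * y"
  shows "norm v \<le> 2 * norm (1::'a)"
proof -
  have "norm (y * v) \<le> 1/2 * norm v \<and> norm (v * y) \<le> 1/2 * norm v"
    using norm_mult_ineq[of y v] norm_mult_ineq[of v y] assms(1)
    by (smt (verit) mult_right_mono norm_ge_zero mult.commute)
  moreover have "norm (1 + y * v) \<le> norm (1::'a) + norm (y * v)" by (rule norm_triangle_ineq)
  moreover have "norm (1 + v * y) \<le> norm (1::'a) + norm (v * y)" by (rule norm_triangle_ineq)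
  ultimately have "norm v \<le> norm (1::'a) + 1/2 * norm v"
    using assms(2) by auto
  then show ?thesis by simp
qed

lemma small_zero:
  fixes c :: "'a::real_normed_vector"
  assumes "d > 0" and "\<And>t. 0 < t \<Longrightarrow> t \<le> d \<Longrightarrow> norm c \<le> t * M"
  shows "c = 0"
proof (rule ccontr)
  assume "c \<noteq> 0"
  then have n: "norm c > 0" by simp
  define t where "t = min d (norm c / (2 * (\<bar>M\<bar> + 1)))"
  have t0: "t > 0" using assms(1) n by (simp add: t_def)
  have "norm c \<le> t * M" using assms(2)[OF t0] by (simp add: t_def)
  also have "\<dots> \<le> t * (\<bar>M\<bar> + 1)" using t0 by (intro mult_left_mono) auto
  also have "\<dots> \<le> norm c / (2 * (\<bar>M\<bar> + 1)) * (\<bar>M\<bar> + 1)"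
    by (intro mult_right_mono) (auto simp: t_def)
  also have "\<dots> = norm c / 2" by (simp add: field_simps)
  finally show False using n by simp
qed

lemma extract2:
  fixes c0 c1 :: "'a::real_normed_vector"
  assumes "d > 0" and "\<And>t. 0 < t \<Longrightarrow> t \<le> d \<Longrightarrow> c0 + t *\<^sub>R c1 + (t^2) *\<^sub>R r t = 0"
    and "\<And>t. 0 < t \<Longrightarrow> t \<le> d \<Longrightarrow> norm (r t) \<le> M"
  shows "c0 = 0 \<and> c1 = 0"
proof -
  have c0: "c0 = 0"
  proof (rule small_zero[of "min d 1" _ "norm c1 + \<bar>M\<bar>"])
    fix t :: real assume t: "0 < t" "t \<le> min d 1"
    have "c0 + t *\<^sub>R c1 + (t^2) *\<^sub>R r t = 0" using assms(2)[of t] t by simp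
    then have "c0 = - (t *\<^sub>R c1 + (t^2) *\<^sub>R r t)"
      by (metis add.assoc eq_neg_iff_add_eq_0)
    then have "norm c0 \<le> norm (t *\<^sub>R c1) + norm ((t^2) *\<^sub>R r t)"
      by (metis norm_minus_cancel norm_triangle_ineq)
    also have "\<dots> = t * norm c1 + t^2 * norm (r t)" using t by simp
    also have "t^2 * norm (r t) \<le> t * \<bar>M\<bar>"
    proof -
      have "t^2 * norm (r t) \<le> t^2 * \<bar>M\<bar>" using assms(3)[of t] t
        by (intro mult_left_mono) auto
      also have "\<dots> \<le> t * \<bar>M\<bar>" using t by (simp add: power2_eq_square mult_right_le_one_le mult_left_le_one_le mult_right_mono)
      finally show ?thesis .
    qed
    finally show "norm c0 \<le> t * (norm c1 + \<bar>M\<bar>)" by (simp add: algebra_simps)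
  qed (use assms(1) in auto)
  have c1: "c1 = 0"
  proof (rule small_zero[of d _ M])
    fix t :: real assume t: "0 < t" "t \<le> d"
    have "t *\<^sub>R (c1 + t *\<^sub>R r t) = 0" using assms(2)[OF t] c0
      by (simp add: power2_eq_square scaleR_add_right)
    then have "c1 = - (t *\<^sub>R r t)" using t by (simp add: eq_neg_iff_add_eq_0)
    then show "norm c1 \<le> t * M" using assms(3)[OF t] t by (simp add: mult_left_mono)
  qed (use assms(1) in auto)
  show ?thesis using c0 c1 by simp
qed


lemma extract3:
  fixes c0 c1 c2 :: "'a::real_normed_vector"
  assumes "d > 0" and "\<And>t. 0 < t \<Longrightarrow> t \<le> d \<Longrightarrow> c0 + t *\<^sub>R c1 + (t^2) *\<^sub>R c2 + (t^3) *\<^sub>R r t = 0"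
    and "\<And>t. 0 < t \<Longrightarrow> t \<le> d \<Longrightarrow> norm (r t) \<le> M"
  shows "c0 = 0 \<and> c1 = 0 \<and> c2 = 0"
proof -
  have e: "c0 + t *\<^sub>R c1 + (t^2) *\<^sub>R (c2 + t *\<^sub>R r t) = 0" if "0 < t" "t \<le> min d 1" for t
    using assms(2)[of t] that by (simp add: scaleR_add_right power2_eq_square power3_eq_cube add.assoc)
  have b: "norm (c2 + t *\<^sub>R r t) \<le> norm c2 + M" if "0 < t" "t \<le> min d 1" for t
  proof -
    have "norm (c2 + t *\<^sub>R r t) \<le> norm c2 + t * norm (r t)"
      using norm_triangle_ineq[of c2 "t *\<^sub>R r t"] that by simp
    also have "t * norm (r t) \<le> 1 * norm (r t)" using that by (intro mult_right_mono) auto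
    also have "\<dots> \<le> M" using assms(3)[of t] that by simp
    finally show ?thesis by simp
  qed
  have c01: "c0 = 0 \<and> c1 = 0"
    using extract2[of "min d 1" c0 c1 "\<lambda>t. c2 + t *\<^sub>R r t" "norm c2 + M"] e b assms(1) by auto
  have "c2 = 0"
  proof (rule small_zero[of d _ M])
    fix t :: real assume t: "0 < t" "t \<le> d"
    have "(t^2) *\<^sub>R (c2 + t *\<^sub>R r t) = 0" using assms(2)[OF t] c01
      by (simp add: scaleR_add_right power2_eq_square power3_eq_cube)
    then have "c2 = - (t *\<^sub>R r t)" using t by (simp add: eq_neg_iff_add_eq_0)
    then show "norm c2 \<le> t * M" using assms(3)[OF t] t by (simp add: mult_left_mono)
  qed (use assms(1) in auto)
  then show ?thesis using c01 by simp
qed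

lemma expand3:
  fixes U Y P X1 X2 R :: "'b::real_normed_algebra"
  shows "(U - t *\<^sub>R Y) * (P + t *\<^sub>R X1 + (t^2) *\<^sub>R X2 + (t^3) *\<^sub>R R) - U
    = (U*P - U) + t *\<^sub>R (U*X1 - Y*P) + (t^2) *\<^sub>R (U*X2 - Y*X1) + (t^3) *\<^sub>R (U*R - Y*X2 - t *\<^sub>R (Y*R))"
  by (simp add: algebra_simps power2_eq_square power3_eq_cube)

lemma expand2:
  fixes U Y P X1 R :: "'b::real_normed_algebra"
  shows "(P + t *\<^sub>R X1 + (t^2) *\<^sub>R R) * (U - t *\<^sub>R Y) - U
    = (P*U - U) + t *\<^sub>R (X1*U - P*Y) + (t^2) *\<^sub>R (R*U - X1*Y - t *\<^sub>R (R*Y))"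
  by (simp add: algebra_simps power2_eq_square power3_eq_cube)


lemma identI:
  fixes T :: "'a::{cstar_algebra, ring_1} \<Rightarrow> 'b::cstar_algebra" and u x :: 'a
  assumes lin: "clinear T" and K: "\<And>z. norm (T z) \<le> norm z * K" and hom: "star_hom_at T u"
  shows "T u * star (T 1) = T u \<and> T u * star (T (star x)) = T (u*x) * star (T 1)
     \<and> T u * star (T (star (x*x))) = T (u*x) * star (T (star x))"
proof -
  define d where "d = min 1 (1 / (2 * (norm x + 1)))"
  have d0: "d > 0" unfolding d_def by (simp add: add_pos_nonneg) (smt (verit) norm_ge_zero)
  define v where "v t = (SOME v. v = 1 + (t *\<^sub>R x) * v)" for t
  define U where "U = T u"
  define Y where "Y = T (u*x)"
  define P where "P = star (T 1)"
  define X1 where "X1 = star (T (star x))"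
  define X2 where "X2 = star (T (star (x*x)))"
  define R where "R t = star (T (star (x*x*x * v t)))" for t
  define B where "B = norm (x*x*x) * (2 * norm (1::'a)) * \<bar>K\<bar>"
  have small: "norm (t *\<^sub>R x) \<le> 1/2" if "0 < t" "t \<le> d" for t
  proof -
    have "t \<le> 1 / (2 * (norm x + 1))" using that by (simp add: d_def)
    then have "t * norm x \<le> 1 / (2 * (norm x + 1)) * norm x" by (intro mult_right_mono) auto
    also have "\<dots> \<le> 1/2"
    proof -
      have p: "(0::real) < norm x + 1" by (smt (verit) norm_ge_zero)
      then show ?thesis by (simp add: field_simps)
    qed
    finally show ?thesis using that by simp
  qed
  have vt: "v t = 1 + (t *\<^sub>R x) * v t" if "0 < t" "t \<le> d" for t
    unfolding v_def using right_inv_exists[OF small[OF that]] by (rule someI_ex)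
  have Kabs: "norm (T z) \<le> norm z * \<bar>K\<bar>" for z
    using K[of z] by (smt (verit) mult_left_mono norm_ge_zero)
  have Rb: "norm (R t) \<le> B" if "0 < t" "t \<le> d" for t
  proof -
    have "norm (R t) \<le> norm (star (x*x*x * v t)) * \<bar>K\<bar>" unfolding R_def norm_star using Kabs[of "star (x*x*x * v t)"] by (simp add: norm_star)
    also have "\<dots> = norm (x*x*x * v t) * \<bar>K\<bar>" by (simp add: norm_star)
    also have "\<dots> \<le> norm (x*x*x) * norm (v t) * \<bar>K\<bar>"
      by (intro mult_right_mono norm_mult_ineq) auto
    also have "\<dots> \<le> B" unfolding B_def
      using inv_norm_bound[OF small[OF that], of "v t"] vt[OF that]
      by (intro mult_right_mono mult_left_mono) auto
    finally show ?thesis .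
  qed
  have main: "(U*P - U) + t *\<^sub>R (U*X1 - Y*P) + (t^2) *\<^sub>R (U*X2 - Y*X1)
      + (t^3) *\<^sub>R (U*R t - Y*X2 - t *\<^sub>R (Y*R t)) = 0" if t: "0 < t" "t \<le> d" for t
  proof -
    let ?y = "t *\<^sub>R x"
    have "v t = 1 + ?y * (1 + ?y * (1 + ?y * v t))" using vt[OF t] by metis
    then have ve: "v t = 1 + t *\<^sub>R x + (t^2) *\<^sub>R (x*x) + (t^3) *\<^sub>R (x*x*x * v t)"
      by (simp add: algebra_simps power2_eq_square power3_eq_cube)
    have inv: "(1 - ?y) * v t = 1"
    proof -
      have "(1 - ?y) * v t = v t - ?y * v t" by (simp add: algebra_simps)
      then show ?thesis using vt[OF t] by (metis add_diff_cancel_right')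
    qed
    have ab: "(u * (1 - ?y)) * star (star (v t)) = u"
      by (simp add: star_star mult.assoc inv)
    have h: "T (u * (1 - ?y)) * star (T (star (v t))) = T u"
      using hom ab unfolding star_hom_at_def by blast
    have Ta: "T (u * (1 - ?y)) = U - t *\<^sub>R Y"
      by (simp add: U_def Y_def algebra_simps clinear_diff[OF lin] clinear_scaleR[OF lin])
    have Tb: "star (T (star (v t))) = P + t *\<^sub>R X1 + (t^2) *\<^sub>R X2 + (t^3) *\<^sub>R R t"
    proof -
      have "star (T (star (v t))) = star (T (star (1 + t *\<^sub>R x + (t^2) *\<^sub>R (x*x) + (t^3) *\<^sub>R (x*x*x * v t))))"
        using arg_cong[OF ve, of "\<lambda>z. star (T (star z))"] .
      also have "\<dots> = P + t *\<^sub>R X1 + (t^2) *\<^sub>R X2 + (t^3) *\<^sub>R R t"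
        unfolding P_def X1_def X2_def R_def
        by (simp only: star_add star_scaleR clinear_add[OF lin] clinear_scaleR[OF lin] star_one)
      finally show ?thesis .
    qed
    have "(U - t *\<^sub>R Y) * (P + t *\<^sub>R X1 + (t^2) *\<^sub>R X2 + (t^3) *\<^sub>R R t) - U = 0"
      using h Ta Tb U_def by simp
    then show ?thesis unfolding expand3 .
  qed
  have "U*P - U = 0 \<and> U*X1 - Y*P = 0 \<and> U*X2 - Y*X1 = 0"
  proof (rule extract3[OF d0 main])
    fix t :: real assume t: "0 < t" "t \<le> d"
    have "norm (U*R t - Y*X2 - t *\<^sub>R (Y*R t)) \<le> norm (U*R t) + norm (Y*X2) + norm (t *\<^sub>R (Y*R t))"
      by (smt (verit) norm_triangle_ineq4 norm_triangle_ineq)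
    also have "\<dots> \<le> norm U * B + norm Y * norm X2 + 1 * (norm Y * B)"
    proof -
      have "norm (U*R t) \<le> norm U * B"
        using norm_mult_ineq[of U "R t"] Rb[OF t] by (smt (verit) mult_left_mono norm_ge_zero)
      moreover have "norm (Y*R t) \<le> norm Y * B"
        using norm_mult_ineq[of Y "R t"] Rb[OF t] by (smt (verit) mult_left_mono norm_ge_zero)
      moreover have "t \<le> 1" using t by (simp add: d_def)
      moreover have "norm (t *\<^sub>R (Y*R t)) = t * norm (Y*R t)" using t by simp
      moreover have "t * norm (Y*R t) \<le> 1 * (norm Y * B)"
        using \<open>t \<le> 1\<close> \<open>norm (Y*R t) \<le> norm Y * B\<close> t by (intro mult_mono) auto
      ultimately show ?thesis using norm_mult_ineq[of Y X2] by linarith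
    qed
    finally show "norm (U*R t - Y*X2 - t *\<^sub>R (Y*R t)) \<le> norm U * B + norm Y * norm X2 + 1 * (norm Y * B)" .
  qed
  then show ?thesis by (simp add: U_def Y_def P_def X1_def X2_def)
qed


lemma identII:
  fixes T :: "'a::{cstar_algebra, ring_1} \<Rightarrow> 'b::cstar_algebra" and u x :: 'a
  assumes lin: "clinear T" and K: "\<And>z. norm (T z) \<le> norm z * K" and hom: "star_hom_at T u"
  shows "star (T 1) * T u = T u \<and> star (T (star x)) * T u = star (T 1) * T (x*u)"
proof -
  define d where "d = min 1 (1 / (2 * (norm x + 1)))"
  have d0: "d > 0" unfolding d_def by (simp add: add_pos_nonneg) (smt (verit) norm_ge_zero)
  define w where "w t = (SOME w. w = 1 + w * (t *\<^sub>R x))" for t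
  define U where "U = T u"
  define Y where "Y = T (x*u)"
  define P where "P = star (T 1)"
  define X1 where "X1 = star (T (star x))"
  define R where "R t = star (T (star (w t * (x*x))))" for t
  define B where "B = norm (x*x) * (2 * norm (1::'a)) * \<bar>K\<bar>"
  have small: "norm (t *\<^sub>R x) \<le> 1/2" if "0 < t" "t \<le> d" for t
  proof -
    have "t \<le> 1 / (2 * (norm x + 1))" using that by (simp add: d_def)
    then have "t * norm x \<le> 1 / (2 * (norm x + 1)) * norm x" by (intro mult_right_mono) auto
    also have "\<dots> \<le> 1/2"
    proof -
      have p: "(0::real) < norm x + 1" by (smt (verit) norm_ge_zero)
      then show ?thesis by (simp add: field_simps)
    qed
    finally show ?thesis using that by simp
  qed
  have wt: "w t = 1 + w t * (t *\<^sub>R x)" if "0 < t" "t \<le> d" for t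
    unfolding w_def using left_inv_exists[OF small[OF that]] by (rule someI_ex)
  have Kabs: "norm (T z) \<le> norm z * \<bar>K\<bar>" for z
    using K[of z] by (smt (verit) mult_left_mono norm_ge_zero)
  have Rb: "norm (R t) \<le> B" if "0 < t" "t \<le> d" for t
  proof -
    have "norm (R t) \<le> norm (w t * (x*x)) * \<bar>K\<bar>"
      unfolding R_def norm_star using Kabs[of "star (w t * (x*x))"] by (simp add: norm_star)
    also have "\<dots> \<le> norm (w t) * norm (x*x) * \<bar>K\<bar>"
      by (intro mult_right_mono norm_mult_ineq) auto
    also have "\<dots> \<le> (2 * norm (1::'a)) * norm (x*x) * \<bar>K\<bar>"
      using inv_norm_bound[OF small[OF that], of "w t"] wt[OF that]
      by (intro mult_right_mono) auto
    also have "\<dots> = B" unfolding B_def by simp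

    finally show ?thesis .
  qed
  have main: "(P*U - U) + t *\<^sub>R (X1*U - P*Y) + (t^2) *\<^sub>R (R t*U - X1*Y - t *\<^sub>R (R t*Y)) = 0"
    if t: "0 < t" "t \<le> d" for t
  proof -
    let ?y = "t *\<^sub>R x"
    have "w t = 1 + (1 + w t * ?y) * ?y" using wt[OF t] by metis
    then have we: "w t = 1 + t *\<^sub>R x + (t^2) *\<^sub>R (w t * (x*x))"
      by (simp add: algebra_simps power2_eq_square)
    have inv: "w t * (1 - ?y) = 1"
    proof -
      have "w t * (1 - ?y) = w t - w t * ?y" by (simp add: algebra_simps)
      then show ?thesis using wt[OF t] by (metis add_diff_cancel_right')
    qed
    have cd: "star (star (w t)) * ((1 - ?y) * u) = u"
      by (simp add: star_star mult.assoc[symmetric] inv)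
    have h: "star (T (star (w t))) * T ((1 - ?y) * u) = T u"
      using hom cd unfolding star_hom_at_def by blast
    have Td: "T ((1 - ?y) * u) = U - t *\<^sub>R Y"
      by (simp add: U_def Y_def algebra_simps clinear_diff[OF lin] clinear_scaleR[OF lin])
    have Tc: "star (T (star (w t))) = P + t *\<^sub>R X1 + (t^2) *\<^sub>R R t"
    proof -
      have "star (T (star (w t))) = star (T (star (1 + t *\<^sub>R x + (t^2) *\<^sub>R (w t * (x*x)))))"
        using arg_cong[OF we, of "\<lambda>z. star (T (star z))"] .
      also have "\<dots> = P + t *\<^sub>R X1 + (t^2) *\<^sub>R R t"
        unfolding P_def X1_def R_def
        by (simp only: star_add star_scaleR clinear_add[OF lin] clinear_scaleR[OF lin] star_one)
      finally show ?thesis .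
    qed
    have "(P + t *\<^sub>R X1 + (t^2) *\<^sub>R R t) * (U - t *\<^sub>R Y) - U = 0"
      using h Td Tc U_def by simp
    then show ?thesis unfolding expand2 .
  qed
  have "P*U - U = 0 \<and> X1*U - P*Y = 0"
  proof (rule extract2[OF d0 main])
    fix t :: real assume t: "0 < t" "t \<le> d"
    have "t \<le> 1" using t by (simp add: d_def)
    have a: "norm (R t*U) \<le> B * norm U"
      using norm_mult_ineq[of "R t" U] Rb[OF t] by (smt (verit) mult_right_mono norm_ge_zero)
    have b: "norm (R t*Y) \<le> B * norm Y"
      using norm_mult_ineq[of "R t" Y] Rb[OF t] by (smt (verit) mult_right_mono norm_ge_zero)
    have c: "norm (t *\<^sub>R (R t*Y)) = t * norm (R t*Y)" using t by simp
    have e: "t * norm (R t*Y) \<le> 1 * (B * norm Y)"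
      using \<open>t \<le> 1\<close> b t by (intro mult_mono) auto
    have "norm (R t*U - X1*Y - t *\<^sub>R (R t*Y)) \<le> norm (R t*U) + norm (X1*Y) + norm (t *\<^sub>R (R t*Y))"
      by (smt (verit) norm_triangle_ineq4 norm_triangle_ineq)
    then show "norm (R t*U - X1*Y - t *\<^sub>R (R t*Y)) \<le> B * norm U + norm X1 * norm Y + 1 * (B * norm Y)"
      using a c e norm_mult_ineq[of X1 Y] by linarith
  qed
  then show ?thesis by (simp add: U_def Y_def P_def X1_def)
qed


theorem theorem3p1:
  fixes T :: "'a::{cstar_algebra, ring_1} \<Rightarrow> 'b::cstar_algebra" and u :: 'a
  assumes "bounded_clinear T" and "unitary u" and "star_hom_at T u"
  shows "projection (T 1)
    \<and> (\<forall>a. T 1 * T a = T a * T 1)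
    \<and> jordan_hom (\<lambda>a. T 1 * T a)
    \<and> ((\<exists>e::'b. (\<forall>y. e * y = y \<and> y * e = y) \<and> T u * star (T u) = e \<and> star (T u) * T u = e)
         \<longrightarrow> (\<forall>x. T 1 * T x = T x))
    \<and> ((\<forall>x. T 1 * T x = T x) \<longrightarrow> jordan_hom T)"
proof -
  have lin: "clinear T" using assms(1) unfolding bounded_clinear_def by blast
  obtain K where K: "\<And>z. norm (T z) \<le> norm z * K" using assms(1) unfolding bounded_clinear_def by blast
  have uu: "u * star u = 1" "star u * u = 1" using assms(2) unfolding unitary_def by auto
  note I = identI[OF lin K assms(3)]
  note II = identII[OF lin K assms(3)]
  define U where "U = T u"
  define p where "p = T 1"
  have UP: "U * star p = U" using I[of 0] unfolding U_def p_def by blast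
  have PU: "star p * U = U" using II[of 0] unfolding U_def p_def by blast
  have UU1: "U * star U = p * star p"
    using I[of "star u"] uu unfolding U_def p_def by (simp add: star_star)
  have UU2: "star U * U = star p * p"
    using II[of "star u"] uu unfolding U_def p_def by (simp add: star_star)
  have e1: "star p * p * star p = star p * p"
    by (metis UP UU2 mult.assoc)
  have UsP: "star U * p = star U" using arg_cong[OF PU, of star] by (simp add: star_mult star_star)
  have e2: "p * star p * p = p * star p"
    by (metis UsP UU1 mult.assoc)
  have e3: "p * star p * p = star p * p"
    using arg_cong[OF e1, of star] by (simp add: star_mult star_star mult.assoc)
  define q where "q = star p * p"
  have qalt: "q = p * star p" using e2 e3 q_def by simp
  have qs: "star q = q" unfolding q_def by (simp add: star_mult star_star)
  have qp: "q * p = q" using e2 qalt by simp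
  have qq: "q * q = q" using e1 qp unfolding q_def by (metis mult.assoc)
  have psq: "star p * q = q" using arg_cong[OF qp, of star] qs by (simp add: star_mult)
  have "star (p - q) * (p - q) = 0"
    by (simp add: star_diff algebra_simps qs psq qp qq flip: q_def)
  then have "norm (p - q) * norm (p - q) = 0" using cstar_identity[of "p - q"] by simp
  then have pq: "p = q" by simp
  have ps: "star p = p" using pq qs by simp
  have pp: "p * p = p" using pq qalt ps by simp
  have proj: "projection p" unfolding projection_def using ps pp by simp
  have UU1': "U * star U = p" using UU1 ps pp by simp
  have UU2': "star U * U = p" using UU2 ps pp by simp
  have comS: "p * star (T (star x)) = star (T (star x)) * p" for x
  proof -
    define S where "S = star (T (star x))"
    have i1: "U * S = T (u*x) * p" using I[of x] ps unfolding U_def S_def p_def by simp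
    have a: "p * S = star U * T (u*x) * p"
      using arg_cong[OF i1, of "\<lambda>z. star U * z"] UU2' by (metis mult.assoc)
    have a': "p * S * p = p * S" using a pp by (metis mult.assoc)
    have i2: "S * U = p * T (x*u)" using II[of x] ps unfolding U_def S_def p_def by simp
    have b: "S * p = p * T (x*u) * star U"
      using arg_cong[OF i2, of "\<lambda>z. z * star U"] UU1' by (metis mult.assoc)
    have b': "p * S * p = S * p" using b pp by (metis mult.assoc)
    show ?thesis using a' b' unfolding S_def by simp
  qed
  have com: "p * T a = T a * p" for a
  proof -
    have "star (p * star (T (star (star a)))) = star (star (T (star (star a))) * p)"
      using comS[of "star a"] by simp
    then show ?thesis by (simp add: star_mult star_star ps)
  qed
  have sq: "p * T (a*a) = p * (T a * T a)" for a
  proof -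
    define x where "x = star a"
    define S where "S = star (T (star x))"
    define S2 where "S2 = star (T (star (x*x)))"
    have i1: "U * S = T (u*x) * p" using I[of x] ps unfolding U_def S_def p_def by simp
    have i2: "U * S2 = T (u*x) * S" using I[of x] unfolding U_def S_def S2_def by simp
    have "U * S2 * p = T (u*x) * (S * p)" using i2 by (simp add: mult.assoc)
    also have "\<dots> = T (u*x) * p * S" using comS[of x] unfolding S_def p_def by (simp add: mult.assoc)
    also have "\<dots> = U * S * S" using i1 by simp
    finally have "star U * (U * S2 * p) = star U * (U * S * S)" by simp
    then have "p * S2 * p = p * S * S" using UU2' by (simp add: mult.assoc[symmetric])
    then have "p * S2 = p * (S * S)" using comS[of "x*x"] pp unfolding S2_def p_def
      by (simp add: mult.assoc)
    then have "star (p * S2) = star (p * (S * S))" by simp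
    then have "T (a*a) * p = T a * T a * p"
      unfolding S_def S2_def x_def by (simp add: star_mult star_star ps mult.assoc)
    then show ?thesis using com[of "a*a"] com[of a] by (metis mult.assoc)
  qed
  have jp: "p * T (a*b + b*a) = p * T a * (p * T b) + p * T b * (p * T a)" for a b
  proof -
    have "p * T ((a+b)*(a+b)) = p * (T (a+b) * T (a+b))" by (rule sq)
    then have "p * T (a*a) + p * T (a*b + b*a) + p * T (b*b) = p * (T a * T a) + p * (T a * T b + T b * T a) + p * (T b * T b)"
      by (simp add: algebra_simps clinear_add[OF lin])
    then have "p * T (a*b + b*a) = p * (T a * T b + T b * T a)" using sq[of a] sq[of b] by simp
    moreover have "p * T a * (p * T b) = p * (T a * T b)"
      by (metis com mult.assoc pp)
    moreover have "p * T b * (p * T a) = p * (T b * T a)"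
      by (metis com mult.assoc pp)
    ultimately show ?thesis by (simp add: algebra_simps)
  qed
  have jp': "p * T (a*b) + p * T (b*a) = p * T a * (p * T b) + p * T b * (p * T a)" for a b
    using jp[of a b] by (simp add: clinear_add[OF lin] distrib_left)
  have jh: "jordan_hom (\<lambda>a. p * T a)"
    unfolding jordan_hom_def clinear_def jordan_prod_def
    by (simp add: clinear_add[OF lin] clinear_cscale[OF lin] distrib_left mult_cscale_right jp')
  have part4: "(\<exists>e::'b. (\<forall>y. e * y = y \<and> y * e = y) \<and> T u * star (T u) = e \<and> star (T u) * T u = e)
         \<longrightarrow> (\<forall>x. T 1 * T x = T x)"
    using UU1' unfolding U_def p_def by auto
  have part5: "(\<forall>x. T 1 * T x = T x) \<longrightarrow> jordan_hom T"
  proof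
    assume h: "\<forall>x. T 1 * T x = T x"
    have "(\<lambda>a. p * T a) = T" using h unfolding p_def by auto
    then show "jordan_hom T" using jh by simp
  qed
  show ?thesis using proj com jh part4 part5 unfolding p_def by auto
qed

end
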